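(* Let $\mathcal{A}$ be a pOC with state set $Q$ and let $p,q\in Q$ be such that $[p{\downarrow}q]>0$ and $q$ is not in a bottom strongly connected component of $\mathcal{X}$. Then $$E(p{\downarrow}q)\le \frac{5|Q|}{x_{\min}^{|Q|+|Q|^3}}.$$
   Context: A pOC is $\mathcal{A}=(Q,\delta^{=0},\delta^{>0},P^{=0},P^{>0})$ with the following components. - $Q$ is a finite set of states. - $\delta^{>0}\subseteq Q\times\{-1,0,1\}\times Q$ is the set of positive rules and $\delta^{=0}\subseteq Q\times\{0,1\}\times Q$ is the set of zero rules. Every state has an outgoing positive rule and an outgoing zero rule. - $P^{>0}$ and $P^{=0}$ assign to each state a positive rational probability distribution over its outgoing positive rules and over its outgoing zero rules, respectively. The Markov chain $\mathcal{M}_\mathcal{A}$ on configurations $p(i)$ has the following transitions: - $p(0)\to q(c)$ with probability $P^{=0}(p,c,q)$; - for $i\ge1$, $p(i)\to q(i+c)$ with probability $P^{>0}(p,c,q)$. $\mathrm{Run}(p{\downarrow}q)$ is the set of runs from $p(1)$ that visit $q(0)$ with the counter positive before that visit, and $[p{\downarrow}q]$ is its probability. $E(p{\downarrow}q)$ is the conditional expected number of transitions until the first visit of $q(0)$, given $\mathrm{Run}(p{\downarrow}q)$. $\mathcal{X}$ is the underlying finite Markov chain of $\mathcal{A}$. Its state set is $Q$ and its transition matrix is $A$ with $A_{pq}=\sum_{c}P^{>0}(p,c,q)$. $x_{\min}$ is the least positive probability used in the rules of $\mathcal{A}$. *)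

theory Defs
  imports "HOL-Analysis.Analysis" "HOL-Library.Extended_Nonnegative_Real"
begin

text \<open>A pOC over the finite state type 'q (so Q = UNIV, |Q| = CARD('q)).
  Pz p c q is the probability of the zero rule (p,c,q), Pp p c q that of the
  positive rule (p,c,q); a rule exists iff its probability is positive.\<close>

definition pOC :: "('q::finite \<Rightarrow> int \<Rightarrow> 'q \<Rightarrow> real) \<Rightarrow> ('q \<Rightarrow> int \<Rightarrow> 'q \<Rightarrow> real) \<Rightarrow> bool" where
  "pOC Pz Pp \<longleftrightarrow>
     (\<forall>p c q. Pz p c q \<ge> 0 \<and> Pp p c q \<ge> 0) \<and>
     (\<forall>p c q. Pz p c q \<in> \<rat> \<and> Pp p c q \<in> \<rat>) \<and>
     (\<forall>p c q. Pp p c q > 0 \<longrightarrow> c \<in> {-1, 0, 1}) \<and>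
     (\<forall>p c q. Pz p c q > 0 \<longrightarrow> c \<in> {0, 1}) \<and>
     (\<forall>p. (\<Sum>c\<in>{-1,0,1}. \<Sum>q\<in>UNIV. Pp p c q) = 1) \<and>
     (\<forall>p. (\<Sum>c\<in>{0,1}. \<Sum>q\<in>UNIV. Pz p c q) = 1)"

text \<open>hit Pp n p i q: probability (in the Markov chain M_A) of the runs from p(i)
  which are in configuration q(0) after exactly n steps and have positive
  counter in all configurations before. Only positive rules are used, since
  the counter is positive before that visit.\<close>

fun hit :: "('q::finite \<Rightarrow> int \<Rightarrow> 'q \<Rightarrow> real) \<Rightarrow> nat \<Rightarrow> 'q \<Rightarrow> nat \<Rightarrow> 'q \<Rightarrow> real" where
  "hit Pp 0 p i q = (if i = 0 \<and> p = q then 1 else 0)"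
| "hit Pp (Suc n) p i q =
     (if i = 0 then 0
      else (\<Sum>c\<in>{-1,0,1}. \<Sum>r\<in>UNIV. Pp p c r * hit Pp n r (nat (int i + c)) q))"

definition termprob :: "('q::finite \<Rightarrow> int \<Rightarrow> 'q \<Rightarrow> real) \<Rightarrow> 'q \<Rightarrow> 'q \<Rightarrow> real" where
  "termprob Pp p q = (\<Sum>n. hit Pp n p 1 q)"

text \<open>E(p\<down>q): conditional expected number of transitions until the first
  visit of q(0), given Run(p\<down>q) (possibly infinite, hence ennreal).\<close>
definition condexp :: "('q::finite \<Rightarrow> int \<Rightarrow> 'q \<Rightarrow> real) \<Rightarrow> 'q \<Rightarrow> 'q \<Rightarrow> ennreal" where
  "condexp Pp p q = (\<Sum>n. ennreal (real n * hit Pp n p 1 q)) / ennreal (termprob Pp p q)"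

definition Xmat :: "('q::finite \<Rightarrow> int \<Rightarrow> 'q \<Rightarrow> real) \<Rightarrow> 'q \<Rightarrow> 'q \<Rightarrow> real" where
  "Xmat Pp p q = (\<Sum>c\<in>{-1,0,1}. Pp p c q)"

definition Xedges :: "('q::finite \<Rightarrow> int \<Rightarrow> 'q \<Rightarrow> real) \<Rightarrow> ('q \<times> 'q) set" where
  "Xedges Pp = {(p, q). Xmat Pp p q > 0}"

definition in_bscc :: "('q::finite \<Rightarrow> int \<Rightarrow> 'q \<Rightarrow> real) \<Rightarrow> 'q \<Rightarrow> bool" where
  "in_bscc Pp q \<longleftrightarrow> (\<forall>r. (q, r) \<in> (Xedges Pp)\<^sup>* \<longrightarrow> (r, q) \<in> (Xedges Pp)\<^sup>*)"

definition xmin :: "('q::finite \<Rightarrow> int \<Rightarrow> 'q \<Rightarrow> real) \<Rightarrow> ('q \<Rightarrow> int \<Rightarrow> 'q \<Rightarrow> real) \<Rightarrow> real" where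
  "xmin Pz Pp = Min ({Pz p c q | p c q. Pz p c q > 0} \<union> {Pp p c q | p c q. Pp p c q > 0})"

end

theory Submission
  imports Defs
begin

lemma Pp_nonneg: assumes "pOC Pz Pp" shows "0 \<le> Pp r c s"
proof -
  have "\<forall>p c q. Pz p c q \<ge> 0 \<and> Pp p c q \<ge> 0" using assms[unfolded pOC_def] by (rule conjunct1)
  then show ?thesis by blast
qed

lemma Pp_c: assumes "pOC Pz Pp" "0 < Pp r c s" shows "c \<in> {-1,0,1}"
proof -
  have "\<forall>p c q. Pp p c q > 0 \<longrightarrow> c \<in> {-1, 0, 1}" using assms(1)[unfolded pOC_def] by (elim conjE)
  then show ?thesis using assms(2) by blast
qed

lemma Pp_sum: assumes "pOC Pz Pp" shows "(\<Sum>c\<in>{-1,0,1}. \<Sum>s\<in>UNIV. Pp r c s) = 1"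
proof -
  have "\<forall>p. (\<Sum>c\<in>{-1,0,1}. \<Sum>q\<in>UNIV. Pp p c q) = 1" using assms(1)[unfolded pOC_def] by (elim conjE)
  then show ?thesis by blast
qed

lemma Pz_c: assumes "pOC Pz Pp" "0 < Pz r c s" shows "c \<in> {0,1}"
proof -
  have "\<forall>p c q. Pz p c q > 0 \<longrightarrow> c \<in> {0, 1}" using assms(1)[unfolded pOC_def] by (elim conjE)
  then show ?thesis using assms(2) by blast
qed

lemma wsum_le:
  assumes "pOC Pz Pp" and "\<And>c s. v c s \<le> b"
  shows "(\<Sum>c\<in>{-1,0,1::int}. \<Sum>s\<in>UNIV. Pp r c s * v c s) \<le> b"
proof -
  have "(\<Sum>c\<in>{-1,0,1::int}. \<Sum>s\<in>UNIV. Pp r c s * v c s) \<le> (\<Sum>c\<in>{-1,0,1::int}. \<Sum>s\<in>UNIV. Pp r c s * b)"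
    by (intro sum_mono mult_left_mono) (auto simp: Pp_nonneg[OF assms(1)] assms(2))
  also have "\<dots> = (\<Sum>c\<in>{-1,0,1}. \<Sum>s\<in>UNIV. Pp r c s) * b"
    by (simp only: sum_distrib_right)
  also have "\<dots> = b" using Pp_sum[OF assms(1)] by simp
  finally show ?thesis .
qed

lemma wsum_nonneg:
  assumes "pOC Pz Pp" and "\<And>c s. 0 \<le> v c s"
  shows "0 \<le> (\<Sum>c\<in>{-1,0,1::int}. \<Sum>s\<in>UNIV. Pp r c s * v c s)"
  by (intro sum_nonneg mult_nonneg_nonneg) (auto simp: Pp_nonneg[OF assms(1)] assms(2))

lemma wsum_ge_term:
  assumes "pOC Pz Pp" and "\<And>c s. 0 \<le> v c s" and "c0 \<in> {-1,0,1}"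
  shows "Pp r c0 s0 * v c0 s0 \<le> (\<Sum>c\<in>{-1,0,1::int}. \<Sum>s\<in>UNIV. Pp r c s * v c s)"
proof -
  have "Pp r c0 s0 * v c0 s0 \<le> (\<Sum>s\<in>UNIV. Pp r c0 s * v c0 s)"
    by (rule member_le_sum) (auto intro: mult_nonneg_nonneg simp: Pp_nonneg[OF assms(1)] assms(2))
  also have "\<dots> \<le> (\<Sum>c\<in>{-1,0,1::int}. \<Sum>s\<in>UNIV. Pp r c s * v c s)"
    by (rule member_le_sum[OF assms(3)]) (auto intro!: sum_nonneg mult_nonneg_nonneg simp: Pp_nonneg[OF assms(1)] assms(2))
  finally show ?thesis .
qed

lemma wsum_one_minus:
  assumes "pOC Pz Pp"
  shows "1 - (\<Sum>c\<in>{-1,0,1::int}. \<Sum>s\<in>UNIV. Pp r c s * v c s) = (\<Sum>c\<in>{-1,0,1::int}. \<Sum>s\<in>UNIV. Pp r c s * (1 - v c s))"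
proof -
  have "(\<Sum>c\<in>{-1,0,1::int}. \<Sum>s\<in>UNIV. Pp r c s * (1 - v c s)) =
     (\<Sum>c\<in>{-1,0,1::int}. \<Sum>s\<in>UNIV. Pp r c s) - (\<Sum>c\<in>{-1,0,1::int}. \<Sum>s\<in>UNIV. Pp r c s * v c s)"
    by (simp only: right_diff_distrib mult_1_right sum_subtractf)
  then show ?thesis using Pp_sum[OF assms] by simp
qed

definition X :: "('q::finite \<Rightarrow> int \<Rightarrow> 'q \<Rightarrow> real) \<Rightarrow> ('q \<Rightarrow> int \<Rightarrow> 'q \<Rightarrow> real) \<Rightarrow> real set" where
  "X Pz Pp = {Pz p c q | p c q. Pz p c q > 0} \<union> {Pp p c q | p c q. Pp p c q > 0}"

lemma X_finite:
  fixes Pz Pp :: "'q::finite \<Rightarrow> int \<Rightarrow> 'q \<Rightarrow> real"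
  assumes "pOC Pz Pp" shows "finite (X Pz Pp)"
proof -
  have 1: "{Pz p c q | p c q. Pz p c q > 0} \<subseteq> (\<lambda>(p,c,q). Pz p c q) ` (UNIV \<times> {0,1} \<times> UNIV)"
  proof
    fix x assume "x \<in> {Pz p c q | p c q. Pz p c q > 0}"
    then obtain p c q where x: "x = Pz p c q" "Pz p c q > 0" by blast
    then have "c \<in> {0,1}" using Pz_c[OF assms] by blast
    then show "x \<in> (\<lambda>(p,c,q). Pz p c q) ` (UNIV \<times> {0,1} \<times> UNIV)"
      using x by (auto intro!: image_eqI[where x="(p,c,q)"])
  qed
  have 2: "{Pp p c q | p c q. Pp p c q > 0} \<subseteq> (\<lambda>(p,c,q). Pp p c q) ` (UNIV \<times> {-1,0,1} \<times> UNIV)"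
  proof
    fix x assume "x \<in> {Pp p c q | p c q. Pp p c q > 0}"
    then obtain p c q where x: "x = Pp p c q" "Pp p c q > 0" by blast
    then have "c \<in> {-1,0,1}" using Pp_c[OF assms] by blast
    then show "x \<in> (\<lambda>(p,c,q). Pp p c q) ` (UNIV \<times> {-1,0,1} \<times> UNIV)"
      using x by (auto intro!: image_eqI[where x="(p,c,q)"])
  qed
  have "finite ((\<lambda>(p,c,q). Pz p c q) ` (UNIV \<times> {0::int,1} \<times> (UNIV::'q set)) \<union> (\<lambda>(p,c,q). Pp p c q) ` (UNIV \<times> {-1::int,0,1} \<times> (UNIV::'q set)))"
    by simp
  then show ?thesis unfolding X_def by (rule finite_subset[OF Un_mono[OF 1 2]])
qed

lemma X_nonempty:
  assumes "pOC Pz Pp" shows "\<exists>r c s. 0 < Pp r c s"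
proof (rule ccontr)
  assume "\<not> ?thesis"
  then have "\<And>r c s. Pp r c s = 0" using Pp_nonneg[OF assms] by (meson antisym not_less)
  then show False using Pp_sum[OF assms, of undefined] by simp
qed

lemma Pp_le1:
  assumes "pOC Pz Pp" and "0 < Pp r c s" shows "Pp r c s \<le> 1"
proof -
  have c: "c \<in> {-1,0,1}" using Pp_c[OF assms] .
  have "Pp r c s * 1 \<le> (\<Sum>c\<in>{-1,0,1::int}. \<Sum>s\<in>UNIV. Pp r c s * 1)"
    by (rule wsum_ge_term[OF assms(1) _ c]) simp
  then show ?thesis using Pp_sum[OF assms(1)] by simp
qed

lemma xmin_props:
  assumes "pOC Pz Pp"
  shows "0 < xmin Pz Pp" "xmin Pz Pp \<le> 1" "\<And>r c s. 0 < Pp r c s \<Longrightarrow> xmin Pz Pp \<le> Pp r c s"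
proof -
  have xd: "xmin Pz Pp = Min (X Pz Pp)" unfolding xmin_def X_def ..
  obtain r c s where rcs: "0 < Pp r c s" using X_nonempty[OF assms] by blast
  then have ne: "X Pz Pp \<noteq> {}" unfolding X_def by blast
  have "Min (X Pz Pp) \<in> X Pz Pp" using Min_in[OF X_finite[OF assms] ne] .
  then show "0 < xmin Pz Pp" unfolding xd X_def by auto
  show le: "\<And>r c s. 0 < Pp r c s \<Longrightarrow> xmin Pz Pp \<le> Pp r c s"
    unfolding xd by (rule Min_le[OF X_finite[OF assms]]) (unfold X_def, blast)
  show "xmin Pz Pp \<le> 1" using le[OF rcs] Pp_le1[OF assms rcs] by simp
qed


lemma swap3: "(\<Sum>k\<in>K. \<Sum>c\<in>C. \<Sum>s\<in>S. f k c s) = (\<Sum>c\<in>C. \<Sum>s\<in>S. \<Sum>k\<in>K. f k c s)"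
  by (subst sum.swap) (rule sum.cong[OF refl], rule sum.swap)

lemma edge_of_Pp:
  assumes "pOC Pz Pp" "0 < Pp r c s" shows "(r,s) \<in> Xedges Pp"
proof -
  have c: "c \<in> {-1,0,1}" using Pp_c[OF assms] .
  have "Pp r c s \<le> (\<Sum>c\<in>{-1,0,1}. Pp r c s)"
    by (rule member_le_sum[OF c]) (simp_all add: Pp_nonneg[OF assms(1)])
  then show ?thesis using assms(2) unfolding Xedges_def Xmat_def by simp
qed

lemma Pp_of_edge:
  assumes "pOC Pz Pp" "(r,s) \<in> Xedges Pp" shows "\<exists>c\<in>{-1,0,1}. 0 < Pp r c s"
proof (rule ccontr)
  assume "\<not> ?thesis"
  then have "\<forall>c\<in>{-1,0,1}. Pp r c s \<le> 0" by (simp add: not_less)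
  then have "(\<Sum>c\<in>{-1,0,1}. Pp r c s) \<le> 0" by (intro sum_nonpos) blast
  then show False using assms(2) unfolding Xedges_def Xmat_def by simp
qed

lemma hit_nonneg: assumes "pOC Pz Pp" shows "0 \<le> hit Pp n r i q"
proof (induction n arbitrary: r i)
  case 0 show ?case by simp
next
  case (Suc n)
  have "0 \<le> (\<Sum>c\<in>{-1,0,1::int}. \<Sum>s\<in>UNIV. Pp r c s * hit Pp n s (nat (int i + c)) q)"
    by (rule wsum_nonneg[OF assms]) (rule Suc.IH)
  then show ?case by simp
qed

lemma hit_notG:
  assumes "pOC Pz Pp" "(r,q) \<notin> (Xedges Pp)\<^sup>*" shows "hit Pp k r i q = 0"
  using assms(2)
proof (induction k arbitrary: r i)
  case 0 then show ?case by auto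
next
  case (Suc k)
  have z: "Pp r c s * hit Pp k s (nat (int i + c)) q = 0" for c s
  proof (cases "Pp r c s > 0")
    case True
    then have "(r,s) \<in> Xedges Pp" by (rule edge_of_Pp[OF assms(1)])
    then have "(s,q) \<notin> (Xedges Pp)\<^sup>*" using Suc.prems by (meson converse_rtrancl_into_rtrancl)
    then show ?thesis using Suc.IH by simp
  next
    case False
    then show ?thesis using Pp_nonneg[OF assms(1), of r c s] by simp
  qed
  have "(\<Sum>c\<in>{-1,0,1::int}. \<Sum>s\<in>UNIV. Pp r c s * hit Pp k s (nat (int i + c)) q) = 0"
    by (simp only: z sum.neutral_const)
  then show ?case by simp
qed

fun Af :: "('q::finite \<Rightarrow> int \<Rightarrow> 'q \<Rightarrow> real) \<Rightarrow> 'q \<Rightarrow> nat \<Rightarrow> 'q \<Rightarrow> nat \<Rightarrow> real" where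
  "Af Pp q 0 r i = (if (r,q) \<in> (Xedges Pp)\<^sup>* then 1 else 0)"
| "Af Pp q (Suc n) r i = (if i = 0 \<or> (r,q) \<notin> (Xedges Pp)\<^sup>* then 0
     else (\<Sum>c\<in>{-1,0,1}. \<Sum>s\<in>UNIV. Pp r c s * Af Pp q n s (nat (int i + c))))"

fun Cf :: "('q::finite \<Rightarrow> int \<Rightarrow> 'q \<Rightarrow> real) \<Rightarrow> 'q \<Rightarrow> nat \<Rightarrow> 'q \<Rightarrow> nat \<Rightarrow> real" where
  "Cf Pp q 0 r i = 1"
| "Cf Pp q (Suc n) r i = (if i = 0 \<or> (r,q) \<notin> (Xedges Pp)\<^sup>* then 0
     else (\<Sum>c\<in>{-1,0,1}. \<Sum>s\<in>UNIV. Pp r c s * Cf Pp q n s (nat (int i + c))))"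

lemma Af_bounds: assumes "pOC Pz Pp" shows "0 \<le> Af Pp q n r i \<and> Af Pp q n r i \<le> 1"
proof (induction n arbitrary: r i)
  case 0 show ?case by simp
next
  case (Suc n)
  have "0 \<le> (\<Sum>c\<in>{-1,0,1::int}. \<Sum>s\<in>UNIV. Pp r c s * Af Pp q n s (nat (int i + c)))"
    by (rule wsum_nonneg[OF assms]) (use Suc.IH in blast)
  moreover have "(\<Sum>c\<in>{-1,0,1::int}. \<Sum>s\<in>UNIV. Pp r c s * Af Pp q n s (nat (int i + c))) \<le> 1"
    by (rule wsum_le[OF assms]) (use Suc.IH in blast)
  ultimately show ?case by simp
qed

lemma Cf_bounds: assumes "pOC Pz Pp" shows "0 \<le> Cf Pp q n r i \<and> Cf Pp q n r i \<le> 1"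
proof (induction n arbitrary: r i)
  case 0 show ?case by simp
next
  case (Suc n)
  have "0 \<le> (\<Sum>c\<in>{-1,0,1::int}. \<Sum>s\<in>UNIV. Pp r c s * Cf Pp q n s (nat (int i + c)))"
    by (rule wsum_nonneg[OF assms]) (use Suc.IH in blast)
  moreover have "(\<Sum>c\<in>{-1,0,1::int}. \<Sum>s\<in>UNIV. Pp r c s * Cf Pp q n s (nat (int i + c))) \<le> 1"
    by (rule wsum_le[OF assms]) (use Suc.IH in blast)
  ultimately show ?case by simp
qed

lemma hit_sum_le1: assumes "pOC Pz Pp" shows "(\<Sum>k<K. hit Pp k r i q) \<le> 1"
proof (induction K arbitrary: r i)
  case 0 show ?case by simp
next
  case (Suc K)
  have eq: "(\<Sum>k<Suc K. hit Pp k r i q) = hit Pp 0 r i q + (\<Sum>k<K. hit Pp (Suc k) r i q)"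
    by (rule sum.lessThan_Suc_shift)
  show ?case
  proof (cases "i = 0")
    case True then show ?thesis unfolding eq by simp
  next
    case False
    have "(\<Sum>k<K. hit Pp (Suc k) r i q) = (\<Sum>k<K. \<Sum>c\<in>{-1,0,1::int}. \<Sum>s\<in>UNIV. Pp r c s * hit Pp k s (nat (int i + c)) q)"
      using False by simp
    also have "\<dots> = (\<Sum>c\<in>{-1,0,1::int}. \<Sum>s\<in>UNIV. Pp r c s * (\<Sum>k<K. hit Pp k s (nat (int i + c)) q))"
      by (subst swap3) (simp only: sum_distrib_left[symmetric])
    also have "\<dots> \<le> 1" by (rule wsum_le[OF assms]) (rule Suc.IH)
    finally show ?thesis unfolding eq using False by simp
  qed
qed

lemma tail_le_Af: assumes "pOC Pz Pp" shows "(\<Sum>k<K. hit Pp (n+k) r i q) \<le> Af Pp q n r i"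
proof (induction n arbitrary: r i)
  case 0
  show ?case
  proof (cases "(r,q) \<in> (Xedges Pp)\<^sup>*")
    case True then show ?thesis using hit_sum_le1[OF assms, where K=K and r=r and i=i and q=q] by simp
  next
    case False then show ?thesis using hit_notG[OF assms False] by simp
  qed
next
  case (Suc n)
  show ?case
  proof (cases "i = 0 \<or> (r,q) \<notin> (Xedges Pp)\<^sup>*")
    case True
    have "hit Pp (Suc n + k) r i q = 0" for k
    proof (cases "i = 0")
      case True then show ?thesis by simp
    next
      case False
      then have "(r,q) \<notin> (Xedges Pp)\<^sup>*" using \<open>i = 0 \<or> (r,q) \<notin> (Xedges Pp)\<^sup>*\<close> by blast
      then show ?thesis by (rule hit_notG[OF assms])
    qed
    then show ?thesis using True by simp
  next
    case False
    have "(\<Sum>k<K. hit Pp (Suc n + k) r i q) = (\<Sum>k<K. \<Sum>c\<in>{-1,0,1::int}. \<Sum>s\<in>UNIV. Pp r c s * hit Pp (n+k) s (nat (int i + c)) q)"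
      using False by simp
    also have "\<dots> = (\<Sum>c\<in>{-1,0,1::int}. \<Sum>s\<in>UNIV. Pp r c s * (\<Sum>k<K. hit Pp (n+k) s (nat (int i + c)) q))"
      by (subst swap3) (simp only: sum_distrib_left[symmetric])
    also have "\<dots> \<le> (\<Sum>c\<in>{-1,0,1::int}. \<Sum>s\<in>UNIV. Pp r c s * Af Pp q n s (nat (int i + c)))"
      by (intro sum_mono mult_left_mono Suc.IH Pp_nonneg[OF assms])
    also have "\<dots> = Af Pp q (Suc n) r i" using False by simp
    finally show ?thesis .
  qed
qed

lemma Af_Cf:
  assumes "pOC Pz Pp" "\<And>s j. Af Pp q n s j \<le> b"
  shows "Af Pp q (m+n) r i \<le> Cf Pp q m r i * b"
proof (induction m arbitrary: r i)
  case 0 show ?case using assms(2) by simp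
next
  case (Suc m)
  show ?case
  proof (cases "i = 0 \<or> (r,q) \<notin> (Xedges Pp)\<^sup>*")
    case True then show ?thesis by auto
  next
    case False
    have "Af Pp q (Suc m + n) r i = (\<Sum>c\<in>{-1,0,1::int}. \<Sum>s\<in>UNIV. Pp r c s * Af Pp q (m+n) s (nat (int i + c)))"
      using False by simp
    also have "\<dots> \<le> (\<Sum>c\<in>{-1,0,1::int}. \<Sum>s\<in>UNIV. Pp r c s * (Cf Pp q m s (nat (int i + c)) * b))"
      by (intro sum_mono mult_left_mono Suc.IH Pp_nonneg[OF assms(1)])
    also have "\<dots> = (\<Sum>c\<in>{-1,0,1::int}. \<Sum>s\<in>UNIV. Pp r c s * Cf Pp q m s (nat (int i + c))) * b"
      by (simp only: sum_distrib_right mult.assoc)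
    also have "\<dots> = Cf Pp q (Suc m) r i * b" using False by simp
    finally show ?thesis .
  qed
qed


section \<open>Paths and cutting\<close>

lemma cut_path:
  assumes "\<forall>i<n. (f i, f (Suc i)) \<in> R" "a < b" "b \<le> n" "f a = f b"
  shows "\<exists>g. g 0 = f 0 \<and> g (n-(b-a)) = f n \<and> (\<forall>i<n-(b-a). (g i, g (Suc i)) \<in> R)"
proof -
  define g where "g = (\<lambda>t. if t \<le> a then f t else f (t + (b-a)))"
  have "g 0 = f 0" unfolding g_def by simp
  moreover have "g (n-(b-a)) = f n"
  proof (cases "n - (b-a) \<le> a")
    case True
    then have "n = b" using assms(2,3) by linarith
    moreover have "b - (b-a) = a" using assms(2) by simp
    ultimately show ?thesis using assms(4) unfolding g_def by simp
  next
    case False then show ?thesis unfolding g_def using assms(2,3) by simp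
  qed
  moreover have "(g i, g (Suc i)) \<in> R" if i: "i < n-(b-a)" for i
  proof -
    consider "i < a" | "i = a" | "i > a" by linarith
    then show ?thesis
    proof cases
      case 1 then show ?thesis unfolding g_def using assms(1) i by simp
    next
      case 2
      then have "g i = f b" "g (Suc i) = f (Suc b)" "b < n" unfolding g_def using assms(2,4) i by auto
      then show ?thesis using assms(1) by simp
    next
      case 3
      then have "g i = f (i + (b-a))" "g (Suc i) = f (Suc (i + (b-a)))" "i + (b-a) < n"
        unfolding g_def using i by auto
      then show ?thesis using assms(1) by simp
    qed
  qed
  ultimately show ?thesis by blast
qed

lemma short_path:
  fixes R :: "('a::finite \<times> 'a) set"
  assumes "(x,y) \<in> R^^n"
  shows "\<exists>k<CARD('a). (x,y) \<in> R^^k"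
proof -
  define m where "m = (LEAST m. (x,y) \<in> R^^m)"
  have m: "(x,y) \<in> R^^m" unfolding m_def by (rule LeastI[of _ n]) (rule assms)
  have ?thesis if "m \<ge> CARD('a)"
  proof -
    obtain f where f: "f 0 = x" "f m = y" "\<forall>i<m. (f i, f (Suc i)) \<in> R"
      using m unfolding relpow_fun_conv by blast
    have "\<not> inj_on f {..m}"
    proof
      assume "inj_on f {..m}"
      then have "card {..m} \<le> card (UNIV :: 'a set)" by (rule card_inj_on_le) auto
      then show False using that by simp
    qed
    then obtain a b where ab: "a \<le> m" "b \<le> m" "a \<noteq> b" "f a = f b" unfolding inj_on_def by auto
    obtain a' b' where ab': "a' < b'" "b' \<le> m" "f a' = f b'"
    proof (cases "a < b")
      case True then show ?thesis using that ab by blast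
    next
      case False then show ?thesis using that[of b a] ab by auto
    qed
    obtain g where g: "g 0 = f 0" "g (m-(b'-a')) = f m" "\<forall>i<m-(b'-a'). (g i, g (Suc i)) \<in> R"
      using cut_path[OF f(3) ab'] by blast
    have "(x,y) \<in> R^^(m-(b'-a'))" unfolding relpow_fun_conv using g f by metis
    then have "m \<le> m-(b'-a')" unfolding m_def by (rule Least_le)
    then show ?thesis using ab' by linarith
  qed
  then show ?thesis using m by (metis not_le)
qed

section \<open>Escape\<close>

lemma Cf_escape:
  assumes "pOC Pz Pp" "(r,s) \<in> (Xedges Pp)^^k" "(s,q) \<notin> (Xedges Pp)\<^sup>*" "k < m"
  shows "Cf Pp q m r i \<le> 1 - xmin Pz Pp ^ k"
  using assms(2,4)
proof (induction k arbitrary: r i m)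
  case 0
  then have "r = s" by simp
  obtain m' where "m = Suc m'" using 0 by (cases m) auto
  then show ?case using assms(3) \<open>r = s\<close> by simp
next
  case (Suc k)
  obtain y where y: "(r,y) \<in> Xedges Pp" "(y,s) \<in> (Xedges Pp)^^k" using relpow_Suc_D2[OF Suc.prems(1)] by blast
  obtain m' where m': "m = Suc m'" "k < m'" using Suc.prems(2) by (cases m) auto
  have x: "0 < xmin Pz Pp" "xmin Pz Pp \<le> 1" using xmin_props[OF assms(1)] by auto
  have xk: "xmin Pz Pp ^ Suc k \<le> 1" by (rule power_le_one) (use x in auto)
  show ?case
  proof (cases "i = 0 \<or> (r,q) \<notin> (Xedges Pp)\<^sup>*")
    case True then show ?thesis using xk m' by auto
  next
    case False
    obtain c where c: "c \<in> {-1,0,1}" "0 < Pp r c y" using Pp_of_edge[OF assms(1) y(1)] by blast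
    have IH: "Cf Pp q m' y (nat (int i + c)) \<le> 1 - xmin Pz Pp ^ k" using Suc.IH[OF y(2) m'(2)] .
    have "xmin Pz Pp * xmin Pz Pp ^ k \<le> Pp r c y * (1 - Cf Pp q m' y (nat (int i + c)))"
      by (rule mult_mono) (use xmin_props(3)[OF assms(1) c(2)] IH x in auto)
    also have "\<dots> \<le> (\<Sum>c\<in>{-1,0,1::int}. \<Sum>s\<in>UNIV. Pp r c s * (1 - Cf Pp q m' s (nat (int i + c))))"
      by (rule wsum_ge_term[OF assms(1) _ c(1), where v="\<lambda>c s. 1 - Cf Pp q m' s (nat (int i + c))"])
        (use Cf_bounds[OF assms(1)] in auto)
    also have "\<dots> = 1 - (\<Sum>c\<in>{-1,0,1::int}. \<Sum>s\<in>UNIV. Pp r c s * Cf Pp q m' s (nat (int i + c)))"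
      by (rule wsum_one_minus[OF assms(1), symmetric])
    also have "\<dots> = 1 - Cf Pp q m r i" using False m' by simp
    finally show ?thesis by simp
  qed
qed

lemma Cf_N:
  fixes Pz Pp :: "'q::finite \<Rightarrow> int \<Rightarrow> 'q \<Rightarrow> real"
  assumes "pOC Pz Pp" "\<not> in_bscc Pp q"
  shows "Cf Pp q CARD('q) r i \<le> 1 - xmin Pz Pp ^ CARD('q)"
proof -
  have x: "0 < xmin Pz Pp" "xmin Pz Pp \<le> 1" using xmin_props[OF assms(1)] by auto
  obtain s where s: "(q,s) \<in> (Xedges Pp)\<^sup>*" "(s,q) \<notin> (Xedges Pp)\<^sup>*"
    using assms(2) unfolding in_bscc_def by blast
  obtain N' where N': "CARD('q) = Suc N'" using finite_UNIV_card_ge_0[where 'a='q] by (cases "CARD('q)") auto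
  show ?thesis
  proof (cases "(r,q) \<in> (Xedges Pp)\<^sup>*")
    case False
    have "xmin Pz Pp ^ CARD('q) \<le> 1" by (rule power_le_one) (use x in auto)
    then show ?thesis using False N' by simp
  next
    case True
    then have "(r,s) \<in> (Xedges Pp)\<^sup>*" using s(1) by (rule rtrancl_trans)
    then obtain n where "(r,s) \<in> (Xedges Pp)^^n" unfolding rtrancl_power by blast
    then obtain k where k: "k < CARD('q)" "(r,s) \<in> (Xedges Pp)^^k" using short_path by blast
    have "Cf Pp q CARD('q) r i \<le> 1 - xmin Pz Pp ^ k" by (rule Cf_escape[OF assms(1) k(2) s(2) k(1)])
    moreover have "xmin Pz Pp ^ CARD('q) \<le> xmin Pz Pp ^ k" using x k(1) by (intro power_decreasing) auto
    ultimately show ?thesis by simp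
  qed
qed

lemma Af_decay:
  fixes Pz Pp :: "'q::finite \<Rightarrow> int \<Rightarrow> 'q \<Rightarrow> real"
  assumes "pOC Pz Pp" "\<not> in_bscc Pp q"
  shows "Af Pp q (k * CARD('q) + l) r i \<le> (1 - xmin Pz Pp ^ CARD('q)) ^ k"
proof (induction k arbitrary: r i)
  case 0 show ?case using Af_bounds[OF assms(1)] by simp
next
  case (Suc k)
  have x: "0 < xmin Pz Pp" "xmin Pz Pp \<le> 1" using xmin_props[OF assms(1)] by auto
  have b0: "0 \<le> (1 - xmin Pz Pp ^ CARD('q)) ^ k" using x by (simp add: power_le_one)
  have "Af Pp q (Suc k * CARD('q) + l) r i = Af Pp q (CARD('q) + (k * CARD('q) + l)) r i" by (simp add: algebra_simps)
  also have "\<dots> \<le> Cf Pp q CARD('q) r i * (1 - xmin Pz Pp ^ CARD('q)) ^ k"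
    by (rule Af_Cf[OF assms(1)]) (rule Suc.IH)
  also have "\<dots> \<le> (1 - xmin Pz Pp ^ CARD('q)) * (1 - xmin Pz Pp ^ CARD('q)) ^ k"
    by (rule mult_right_mono[OF Cf_N[OF assms] b0])
  finally show ?case by simp
qed


section \<open>Configuration paths\<close>

definition stepR :: "('q::finite \<Rightarrow> int \<Rightarrow> 'q \<Rightarrow> real) \<Rightarrow> (('q \<times> nat) \<times> ('q \<times> nat)) set" where
  "stepR Pp = {((r,i),(s,j)). 0 < i \<and> (\<exists>c. 0 < Pp r c s \<and> int j = int i + c)}"

lemma step_props:
  assumes "pOC Pz Pp" "(x,y) \<in> stepR Pp"
  shows "0 < snd x" "snd y \<le> snd x + 1" "snd x \<le> snd y + 1"
proof -
  obtain r i s j c where x: "x = (r,i)" "y = (s,j)" "0 < i" "0 < Pp r c s" "int j = int i + c"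
    using assms(2) unfolding stepR_def by auto
  have "c \<in> {-1,0,1}" using Pp_c[OF assms(1) x(4)] .
  then show "0 < snd x" "snd y \<le> snd x + 1" "snd x \<le> snd y + 1" using x by auto
qed

lemma ivt_up:
  fixes g :: "nat \<Rightarrow> nat"
  assumes "\<forall>t<n. g (Suc t) \<le> g t + 1"
  shows "s1 \<le> s2 \<Longrightarrow> s2 \<le> n \<Longrightarrow> g s1 \<le> j \<Longrightarrow> j \<le> g s2 \<Longrightarrow> \<exists>s. s1 \<le> s \<and> s \<le> s2 \<and> g s = j"
proof (induction s2)
  case 0 then show ?case by auto
next
  case (Suc s2)
  show ?case
  proof (cases "s1 = Suc s2")
    case True then show ?thesis using Suc.prems by auto
  next
    case False
    then have s12: "s1 \<le> s2" using Suc.prems by simp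
    show ?thesis
    proof (cases "j \<le> g s2")
      case True
      then obtain s where "s1 \<le> s \<and> s \<le> s2 \<and> g s = j" using Suc.IH[OF s12] Suc.prems by auto
      then show ?thesis by (intro exI[of _ s]) auto
    next
      case False
      have "g (Suc s2) \<le> g s2 + 1" using assms Suc.prems(2) by auto
      then have "g (Suc s2) = j" using False Suc.prems by linarith
      then show ?thesis using Suc.prems by auto
    qed
  qed
qed

lemma ivt_down:
  fixes g :: "nat \<Rightarrow> nat"
  assumes "\<forall>t<n. g t \<le> g (Suc t) + 1"
  shows "s1 \<le> s2 \<Longrightarrow> s2 \<le> n \<Longrightarrow> j \<le> g s1 \<Longrightarrow> g s2 \<le> j \<Longrightarrow> \<exists>s. s1 \<le> s \<and> s \<le> s2 \<and> g s = j"
proof (induction s2)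
  case 0 then show ?case by auto
next
  case (Suc s2)
  show ?case
  proof (cases "s1 = Suc s2")
    case True then show ?thesis using Suc.prems by auto
  next
    case False
    then have s12: "s1 \<le> s2" using Suc.prems by simp
    show ?thesis
    proof (cases "g s2 \<le> j")
      case True
      then obtain s where "s1 \<le> s \<and> s \<le> s2 \<and> g s = j" using Suc.IH[OF s12] Suc.prems by auto
      then show ?thesis by (intro exI[of _ s]) auto
    next
      case False
      have "g s2 \<le> g (Suc s2) + 1" using assms Suc.prems(2) by auto
      then have "g (Suc s2) = j" using False Suc.prems by linarith
      then show ?thesis using Suc.prems by auto
    qed
  qed
qed

lemma pos_term:
  assumes "pOC Pz Pp" "\<And>c s. 0 \<le> v c s"
    and "0 < (\<Sum>c\<in>{-1,0,1::int}. \<Sum>s\<in>UNIV. Pp r c s * v c s)"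
  shows "\<exists>c s. 0 < Pp r c s \<and> 0 < v c s"
proof (rule ccontr)
  assume "\<not> ?thesis"
  then have "Pp r c s * v c s \<le> 0" for c s
    using Pp_nonneg[OF assms(1), of r c s] assms(2)[of c s]
    by (metis less_eq_real_def mult_not_zero order_refl)
  then have "(\<Sum>c\<in>{-1,0,1::int}. \<Sum>s\<in>UNIV. Pp r c s * v c s) \<le> 0"
    by (intro sum_nonpos) auto
  then show False using assms(3) by simp
qed

lemma hit_path:
  assumes "pOC Pz Pp" shows "0 < hit Pp n r i q \<Longrightarrow> ((r,i),(q,0)) \<in> (stepR Pp)^^n"
proof (induction n arbitrary: r i)
  case 0 then show ?case by (auto split: if_splits)
next
  case (Suc n)
  then have i: "i \<noteq> 0" by (auto split: if_splits)
  then have "0 < (\<Sum>c\<in>{-1,0,1::int}. \<Sum>s\<in>UNIV. Pp r c s * hit Pp n s (nat (int i + c)) q)"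
    using Suc.prems by simp
  then have "\<exists>c s. 0 < Pp r c s \<and> 0 < hit Pp n s (nat (int i + c)) q"
    by (intro pos_term[OF assms, where v="\<lambda>c s. hit Pp n s (nat (int i + c)) q"] hit_nonneg[OF assms])
  then obtain c s where cs: "0 < Pp r c s" "0 < hit Pp n s (nat (int i + c)) q" by blast
  have "c \<in> {-1,0,1}" using Pp_c[OF assms cs(1)] .
  then have "int (nat (int i + c)) = int i + c" using i by auto
  then have "((r,i),(s, nat (int i + c))) \<in> stepR Pp" unfolding stepR_def using cs(1) i by auto
  then show ?case using Suc.IH[OF cs(2)] by (rule relpow_Suc_I2)
qed

lemma path_hit:
  assumes "pOC Pz Pp" shows "((r,i),(q,0)) \<in> (stepR Pp)^^n \<Longrightarrow> xmin Pz Pp ^ n \<le> hit Pp n r i q"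
proof (induction n arbitrary: r i)
  case 0 then show ?case by simp
next
  case (Suc n)
  obtain y where y: "((r,i),y) \<in> stepR Pp" "(y,(q,0)) \<in> (stepR Pp)^^n" using relpow_Suc_D2[OF Suc.prems] by blast
  obtain s j c where sj: "y = (s,j)" "0 < i" "0 < Pp r c s" "int j = int i + c"
    using y(1) unfolding stepR_def by auto
  have c: "c \<in> {-1,0,1}" using Pp_c[OF assms sj(3)] .
  have j: "nat (int i + c) = j" using sj(4) by simp
  have IH: "xmin Pz Pp ^ n \<le> hit Pp n s j q" using Suc.IH y(2) sj(1) by simp
  have "xmin Pz Pp * xmin Pz Pp ^ n \<le> Pp r c s * hit Pp n s (nat (int i + c)) q"
    unfolding j by (rule mult_mono) (use xmin_props[OF assms] sj(3) IH hit_nonneg[OF assms] in auto)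
  also have "\<dots> \<le> (\<Sum>c\<in>{-1,0,1::int}. \<Sum>s\<in>UNIV. Pp r c s * hit Pp n s (nat (int i + c)) q)"
    by (rule wsum_ge_term[OF assms _ c, where v="\<lambda>c s. hit Pp n s (nat (int i + c)) q"]) (rule hit_nonneg[OF assms])
  also have "\<dots> = hit Pp (Suc n) r i q" using sj(2) by simp
  finally show ?case by simp
qed

lemma shift_step:
  assumes "(x,y) \<in> stepR Pp" "d + 1 \<le> snd x" "d \<le> snd y"
  shows "((fst x, snd x - d), (fst y, snd y - d)) \<in> stepR Pp"
  using assms unfolding stepR_def by auto


lemma height_cut:
  fixes Pz Pp :: "'q::finite \<Rightarrow> int \<Rightarrow> 'q \<Rightarrow> real"
  assumes P: "pOC Pz Pp"
    and f: "\<forall>i<n. (f i, f (Suc i)) \<in> stepR Pp" and f0: "f 0 = (p,1)" and fn: "f n = (q,0)"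
    and t: "t \<le> n" and ht: "CARD('q)^2 < snd (f t)"
  shows "\<exists>n'<n. ((p,1),(q,0)) \<in> (stepR Pp)^^n'"
proof -
  define cnt where "cnt = (\<lambda>s. snd (f s))"
  define h where "h = cnt t"
  have up: "\<forall>s<n. cnt (Suc s) \<le> cnt s + 1" using step_props(2)[OF P] f unfolding cnt_def by blast
  have dn: "\<forall>s<n. cnt s \<le> cnt (Suc s) + 1" using step_props(3)[OF P] f unfolding cnt_def by blast
  have c0: "cnt 0 = 1" using f0 unfolding cnt_def by simp
  have cn: "cnt n = 0" using fn unfolding cnt_def by simp
  define A where "A = (\<lambda>j. GREATEST s. s \<le> t \<and> cnt s = j)"
  define B where "B = (\<lambda>j. LEAST s. t \<le> s \<and> s \<le> n \<and> cnt s = j)"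
  have AB: "A j \<le> t \<and> cnt (A j) = j \<and> t \<le> B j \<and> B j < n \<and> cnt (B j) = j \<and> (\<forall>s. A j \<le> s \<and> s \<le> B j \<longrightarrow> j \<le> cnt s)"
    if j: "1 \<le> j" "j \<le> h" for j
  proof -
    obtain s0 where s0: "s0 \<le> t" "cnt s0 = j" using ivt_up[OF up, of 0 t j] t j c0 h_def by auto
    have A1: "A j \<le> t \<and> cnt (A j) = j" unfolding A_def by (rule GreatestI_nat[of _ s0 t]) (use s0 in auto)
    have A2: "s \<le> A j" if "s \<le> t" "cnt s = j" for s
      unfolding A_def by (rule Greatest_le_nat[of _ s t]) (use that in auto)
    obtain s1 where s1: "t \<le> s1" "s1 \<le> n" "cnt s1 = j" using ivt_down[OF dn, of t n j] t j cn h_def by auto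
    have B1: "t \<le> B j \<and> B j \<le> n \<and> cnt (B j) = j" unfolding B_def by (rule LeastI[of _ s1]) (use s1 in auto)
    have B2: "B j \<le> s" if "t \<le> s" "s \<le> n" "cnt s = j" for s
      unfolding B_def by (rule Least_le) (use that in auto)
    have Bn: "B j < n"
    proof (rule ccontr)
      assume "\<not> B j < n"
      then have "B j = n" using B1 by simp
      then show False using B1 cn j by simp
    qed
    have K: "j \<le> cnt s" if s: "A j \<le> s" "s \<le> B j" for s
    proof (rule ccontr)
      assume lt: "\<not> j \<le> cnt s"
      show False
      proof (cases "s \<le> t")
        case True
        obtain s' where s': "s \<le> s'" "s' \<le> t" "cnt s' = j" using ivt_up[OF up, of s t j] True t lt j h_def by auto
        then have "s' \<le> A j" using A2 by blast
        then have "s' = s" using s'(1) s(1) by simp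
        then show False using s'(3) lt by simp
      next
        case False
        have "s \<le> n" using s(2) B1 by simp
        then obtain s' where s': "t \<le> s'" "s' \<le> s" "cnt s' = j"
          using ivt_down[OF dn, of t s j] False lt j h_def by auto
        then have "B j \<le> s'" using B2 \<open>s \<le> n\<close> by simp
        then have "s' = s" using s'(2) s(2) by simp
        then show False using s'(3) lt by simp
      qed
    qed
    show ?thesis using A1 B1 Bn K by blast
  qed
  define \<phi> where "\<phi> = (\<lambda>j. (fst (f (A j)), fst (f (B j))))"
  have "\<not> inj_on \<phi> {1..h}"
  proof
    assume "inj_on \<phi> {1..h}"
    then have "card {1..h} \<le> card (UNIV :: ('q \<times> 'q) set)" by (rule card_inj_on_le) auto
    then show False using ht unfolding h_def cnt_def by (simp add: card_prod power2_eq_square)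
  qed
  then obtain x y where xy: "x \<in> {1..h}" "y \<in> {1..h}" "\<phi> x = \<phi> y" "x \<noteq> y" unfolding inj_on_def by blast
  obtain j j' where jj: "1 \<le> j" "j < j'" "j' \<le> h" "\<phi> j = \<phi> j'"
  proof (cases "x < y")
    case True then show ?thesis using that[of x y] xy by auto
  next
    case False then show ?thesis using that[of y x] xy by auto
  qed
  have ABj: "A j \<le> t" "cnt (A j) = j" "t \<le> B j" "B j < n" "cnt (B j) = j"
    and Kj: "\<And>s. A j \<le> s \<Longrightarrow> s \<le> B j \<Longrightarrow> j \<le> cnt s" using AB[of j] jj by auto
  have ABj': "A j' \<le> t" "cnt (A j') = j'" "t \<le> B j'" "B j' < n" "cnt (B j') = j'"
    and Kj': "\<And>s. A j' \<le> s \<Longrightarrow> s \<le> B j' \<Longrightarrow> j' \<le> cnt s" using AB[of j'] jj by auto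
  have o1: "A j < A j'"
  proof (rule ccontr)
    assume "\<not> A j < A j'"
    then have "j' \<le> cnt (A j)" using Kj'[of "A j"] ABj ABj' by simp
    then show False using ABj jj by simp
  qed
  have o2: "B j' < B j"
  proof (rule ccontr)
    assume "\<not> B j' < B j"
    then have "j' \<le> cnt (B j)" using Kj'[of "B j"] ABj ABj' by simp
    then show False using ABj jj by simp
  qed
  define d where "d = j' - j"
  define L1 where "L1 = A j"
  define a2 where "a2 = A j'"
  define b2 where "b2 = B j'"
  define B1 where "B1 = B j"
  define M where "M = b2 - a2"
  define sh where "sh = (\<lambda>x::('q \<times> nat). (fst x, snd x - d))"
  have ab2: "a2 \<le> b2" using ABj' unfolding a2_def b2_def by simp
  have e1: "sh (f a2) = f L1"
    using jj ABj ABj' unfolding sh_def a2_def L1_def d_def \<phi>_def cnt_def by (simp add: prod_eq_iff)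
  have e2: "sh (f b2) = f B1"
    using jj ABj ABj' unfolding sh_def b2_def B1_def d_def \<phi>_def cnt_def by (simp add: prod_eq_iff)
  define g where "g = (\<lambda>s. if s < L1 then f s else if s \<le> L1 + M then sh (f (a2 + (s - L1))) else f (B1 + (s - (L1 + M))))"
  define n' where "n' = L1 + M + (n - B1)"
  have ord: "L1 < a2" "a2 \<le> t" "t \<le> b2" "b2 < B1" "B1 < n"
    using o1 o2 ABj ABj' unfolding L1_def a2_def b2_def B1_def by auto
  have nn: "n' < n" unfolding n'_def M_def using ord by linarith
  have g0: "g 0 = f 0"
  proof (cases "L1 = 0")
    case True then show ?thesis unfolding g_def using e1 by simp
  next
    case False then show ?thesis unfolding g_def by simp
  qed
  have gn: "g n' = f n"
  proof -
    have "\<not> n' < L1" "\<not> n' \<le> L1 + M" unfolding n'_def using ord by auto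
    then have "g n' = f (B1 + (n' - (L1 + M)))" unfolding g_def by simp
    also have "B1 + (n' - (L1 + M)) = n" unfolding n'_def using ord by simp
    finally show ?thesis .
  qed
  have gp: "(g i, g (Suc i)) \<in> stepR Pp" if i: "i < n'" for i
  proof -
    consider "Suc i < L1" | "Suc i = L1" | "L1 \<le> i \<and> i < L1 + M" | "i = L1 + M" | "L1 + M < i" by linarith
    then show ?thesis
    proof cases
      case 1
      then have "g i = f i" "g (Suc i) = f (Suc i)" "i < n" unfolding g_def using ord by auto
      then show ?thesis using f by simp
    next
      case 2
      then have "g i = f i" "g (Suc i) = f (Suc i)" "i < n" unfolding g_def using ord e1 by auto
      then show ?thesis using f by simp
    next
      case 3
      define u where "u = a2 + (i - L1)"
      have gu: "g i = sh (f u)" "g (Suc i) = sh (f (Suc u))" unfolding g_def u_def using 3 by (auto simp: Suc_diff_le)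
      have u: "a2 \<le> u" "Suc u \<le> b2" "u < n" unfolding u_def using 3 ord M_def by auto
      have st: "(f u, f (Suc u)) \<in> stepR Pp" using f u(3) by simp
      have "j' \<le> cnt u" "j' \<le> cnt (Suc u)" using Kj'[of u] Kj'[of "Suc u"] u unfolding a2_def b2_def by auto
      then have "d + 1 \<le> snd (f u)" "d \<le> snd (f (Suc u))" unfolding d_def cnt_def using jj by auto
      from shift_step[OF st this] show ?thesis unfolding gu sh_def .
    next
      case 4
      have h4: "\<not> i < L1" "i \<le> L1 + M" "a2 + (i - L1) = b2" using 4 ord ab2 M_def by auto
      have "g i = sh (f (a2 + (i - L1)))" unfolding g_def using h4(1,2) by simp
      then have "g i = sh (f b2)" using h4(3) by simp
      then have gi: "g i = f B1" using e2 by simp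
      have gs: "g (Suc i) = f (Suc B1)" unfolding g_def using 4 ord by simp
      show ?thesis unfolding gi gs using f ord by simp
    next
      case 5
      define u where "u = B1 + (i - (L1 + M))"
      have gu: "g i = f u" "g (Suc i) = f (Suc u)" unfolding g_def u_def using 5 by (auto simp: Suc_diff_le)
      have "u < n" unfolding u_def using 5 i n'_def ord by linarith
      then show ?thesis unfolding gu using f by simp
    qed
  qed
  have "((p,1),(q,0)) \<in> (stepR Pp)^^n'" unfolding relpow_fun_conv
    using g0 gn gp f0 fn by (intro exI[of _ g]) auto
  then show ?thesis using nn by blast
qed


lemma pump:
  fixes Pz Pp :: "'q::finite \<Rightarrow> int \<Rightarrow> 'q \<Rightarrow> real"
  assumes P: "pOC Pz Pp" and n: "((p,1),(q,0)) \<in> (stepR Pp)^^n"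
  shows "\<exists>m \<le> CARD('q)^3. ((p,1),(q,0)) \<in> (stepR Pp)^^m"
proof -
  define m where "m = (LEAST m. ((p,1),(q,0)) \<in> (stepR Pp)^^m)"
  have m: "((p,1),(q,0)) \<in> (stepR Pp)^^m" unfolding m_def by (rule LeastI[of _ n]) (rule n)
  have mini: "((p,1),(q,0)) \<notin> (stepR Pp)^^k" if "k < m" for k
    using not_less_Least[OF that[unfolded m_def]] unfolding m_def .
  obtain f where f: "f 0 = (p,1)" "f m = (q,0)" "\<forall>i<m. (f i, f (Suc i)) \<in> stepR Pp"
    using m unfolding relpow_fun_conv by blast
  have inj: "inj_on f {..<m}"
  proof (rule ccontr)
    assume "\<not> inj_on f {..<m}"
    then obtain x y where xy: "x < m" "y < m" "x \<noteq> y" "f x = f y" unfolding inj_on_def by auto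
    obtain a b where ab: "a < b" "b \<le> m" "f a = f b"
    proof (cases "x < y")
      case True then show ?thesis using that[of x y] xy by auto
    next
      case False then show ?thesis using that[of y x] xy by auto
    qed
    obtain g where g: "g 0 = f 0" "g (m-(b-a)) = f m" "\<forall>i<m-(b-a). (g i, g (Suc i)) \<in> stepR Pp"
      using cut_path[OF f(3) ab] by blast
    have "((p,1),(q,0)) \<in> (stepR Pp)^^(m-(b-a))" unfolding relpow_fun_conv
      using g f by (intro exI[of _ g]) auto
    moreover have "m-(b-a) < m" using ab by simp
    ultimately show False using mini by blast
  qed
  have hgt: "snd (f t) \<le> CARD('q)^2" if t: "t \<le> m" for t
  proof (rule ccontr)
    assume "\<not> snd (f t) \<le> CARD('q)^2"
    then have "CARD('q)^2 < snd (f t)" by simp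
    from height_cut[OF P f(3) f(1) f(2) t this] obtain n' where "n' < m" "((p,1),(q,0)) \<in> (stepR Pp)^^n'" by blast
    then show False using mini by blast
  qed
  have sub: "f ` {..<m} \<subseteq> UNIV \<times> {1..CARD('q)^2}"
  proof
    fix z assume "z \<in> f ` {..<m}"
    then obtain t where t: "t < m" "z = f t" by blast
    have "0 < snd (f t)" using step_props(1)[OF P] f(3) t(1) by blast
    moreover have "snd (f t) \<le> CARD('q)^2" using hgt t by simp
    ultimately show "z \<in> UNIV \<times> {1..CARD('q)^2}" unfolding t(2) mem_Times_iff by simp
  qed
  have "card {..<m} \<le> card (UNIV \<times> {1..CARD('q)^2} :: ('q \<times> nat) set)"
    by (rule card_inj_on_le[OF inj sub]) simp
  then have "m \<le> CARD('q) * CARD('q)^2" by (simp add: card_cartesian_product)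
  then have "m \<le> CARD('q)^3" by (simp add: power2_eq_square power3_eq_cube)
  then show ?thesis using m by blast
qed

section \<open>Numerator\<close>

lemma weighted_sum_eq:
  fixes h :: "nat \<Rightarrow> real"
  shows "(\<Sum>n<M. real n * h n) = (\<Sum>j<M. \<Sum>k<M - Suc j. h (Suc j + k))"
proof (induction M)
  case 0 show ?case by simp
next
  case (Suc M)
  have "(\<Sum>j<Suc M. \<Sum>k<Suc M - Suc j. h (Suc j + k)) = (\<Sum>j<M. \<Sum>k<M - j. h (Suc j + k))"
    by simp
  also have "\<dots> = (\<Sum>j<M. (\<Sum>k<M - Suc j. h (Suc j + k)) + h M)"
  proof (rule sum.cong[OF refl])
    fix j assume "j \<in> {..<M}"
    then have j: "M - j = Suc (M - Suc j)" "Suc j + (M - Suc j) = M" by auto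
    show "(\<Sum>k<M - j. h (Suc j + k)) = (\<Sum>k<M - Suc j. h (Suc j + k)) + h M"
      unfolding j(1) sum.lessThan_Suc j(2) ..
  qed
  also have "\<dots> = (\<Sum>j<M. \<Sum>k<M - Suc j. h (Suc j + k)) + real M * h M"
    by (simp add: sum.distrib)
  finally show ?case using Suc.IH by simp
qed

lemma geo_block:
  fixes r :: real and N :: nat
  assumes "0 \<le> r" "r < 1" "0 < N"
  shows "(\<Sum>j<M. r ^ (j div N)) \<le> real N / (1 - r)"
proof -
  have "(\<Sum>j<M. r ^ (j div N)) \<le> (\<Sum>j<M * N. r ^ (j div N))"
    by (rule sum_mono2) (use assms in auto)
  also have "\<dots> = (\<Sum>m<M. \<Sum>j\<in>{m * N..<m * N + N}. r ^ (j div N))"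
    by (rule sum.nat_group[symmetric])
  also have "\<dots> = (\<Sum>m<M. real N * r ^ m)"
  proof (rule sum.cong[OF refl])
    fix m
    have "j div N = m" if "j \<in> {m * N..<m * N + N}" for j
      by (rule div_nat_eqI) (use that in \<open>auto simp: algebra_simps\<close>)
    then have "(\<Sum>j\<in>{m * N..<m * N + N}. r ^ (j div N)) = (\<Sum>j\<in>{m * N..<m * N + N}. r ^ m)"
      by (intro sum.cong) auto
    then show "(\<Sum>j\<in>{m * N..<m * N + N}. r ^ (j div N)) = real N * r ^ m" by simp
  qed
  also have "\<dots> = real N * ((1 - r ^ M) / (1 - r))"
    using assms by (simp add: sum_distrib_left[symmetric] sum_gp_strict)
  also have "\<dots> \<le> real N / (1 - r)"
    using assms by (simp add: divide_right_mono mult_left_mono)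
  finally show ?thesis .
qed

lemma Af_decay_any:
  fixes Pz Pp :: "'q::finite \<Rightarrow> int \<Rightarrow> 'q \<Rightarrow> real"
  assumes "pOC Pz Pp" "\<not> in_bscc Pp q"
  shows "Af Pp q n r i \<le> (1 - xmin Pz Pp ^ CARD('q)) ^ (n div CARD('q))"
  using Af_decay[OF assms, of "n div CARD('q)" "n mod CARD('q)" r i] by simp

lemma numerator_bound:
  fixes Pz Pp :: "'q::finite \<Rightarrow> int \<Rightarrow> 'q \<Rightarrow> real"
  assumes P: "pOC Pz Pp" and nb: "\<not> in_bscc Pp q"
  shows "(\<Sum>n<M. real n * hit Pp n p 1 q) \<le> real CARD('q) / xmin Pz Pp ^ CARD('q)"
proof -
  define r where "r = 1 - xmin Pz Pp ^ CARD('q)"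
  have x: "0 < xmin Pz Pp" "xmin Pz Pp \<le> 1" using xmin_props[OF P] by auto
  have xN: "0 < xmin Pz Pp ^ CARD('q)" "xmin Pz Pp ^ CARD('q) \<le> 1"
    using x by (auto intro: power_le_one)
  have r: "0 \<le> r" "r < 1" unfolding r_def using xN by auto
  have "(\<Sum>n<M. real n * hit Pp n p 1 q) = (\<Sum>j<M. \<Sum>k<M - Suc j. hit Pp (Suc j + k) p 1 q)"
    by (rule weighted_sum_eq)
  also have "\<dots> \<le> (\<Sum>j<M. r ^ (j div CARD('q)))"
  proof (rule sum_mono)
    fix j
    have "(\<Sum>k<M - Suc j. hit Pp (Suc j + k) p 1 q) \<le> Af Pp q (Suc j) p 1" by (rule tail_le_Af[OF P])
    also have "\<dots> \<le> r ^ (Suc j div CARD('q))" unfolding r_def by (rule Af_decay_any[OF P nb])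
    also have "\<dots> \<le> r ^ (j div CARD('q))" by (rule power_decreasing) (use r in \<open>auto intro: div_le_mono\<close>)
    finally show "(\<Sum>k<M - Suc j. hit Pp (Suc j + k) p 1 q) \<le> r ^ (j div CARD('q))" .
  qed
  also have "\<dots> \<le> real CARD('q) / (1 - r)" by (rule geo_block) (use r in auto)
  also have "\<dots> = real CARD('q) / xmin Pz Pp ^ CARD('q)" unfolding r_def by simp
  finally show ?thesis .
qed

theorem mainTheorem4:
  fixes Pz Pp :: "'q::finite \<Rightarrow> int \<Rightarrow> 'q \<Rightarrow> real" and p q :: 'q
  assumes "pOC Pz Pp"
    and "termprob Pp p q > 0"
    and "\<not> in_bscc Pp q"
  shows "condexp Pp p q \<le>
    ennreal (5 * real CARD('q) / xmin Pz Pp ^ (CARD('q) + CARD('q) ^ 3))"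
proof -
  note P = assms(1)
  define x where "x = xmin Pz Pp"
  define N where "N = CARD('q)"
  have x: "0 < x" "x \<le> 1" using xmin_props[OF P] unfolding x_def by auto
  have N: "1 \<le> N" unfolding N_def using finite_UNIV_card_ge_0[where 'a='q] by simp
  define h where "h = (\<lambda>n. hit Pp n p 1 q)"
  have h0: "0 \<le> h n" for n unfolding h_def by (rule hit_nonneg[OF P])
  have hs: "summable h" unfolding h_def by (rule summableI_nonneg_bounded[OF hit_nonneg[OF P] hit_sum_le1[OF P]])
  have tp: "termprob Pp p q = suminf h" unfolding termprob_def h_def ..
  have "\<exists>n. 0 < h n"
  proof (rule ccontr)
    assume na: "\<not> (\<exists>n. 0 < h n)"
    have "h n = 0" for n using h0[of n] na by (meson antisym not_le)
    then have "h = (\<lambda>_. 0)" by auto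
    then have "suminf h = 0" by simp
    then show False using assms(2) tp by simp
  qed
  then obtain n where "0 < h n" by blast
  then have "((p,1),(q,0)) \<in> (stepR Pp)^^n" unfolding h_def by (rule hit_path[OF P])
  then obtain m where m: "m \<le> N^3" "((p,1),(q,0)) \<in> (stepR Pp)^^m" using pump[OF P] unfolding N_def by blast
  have "x ^ (N^3) \<le> x ^ m" by (rule power_decreasing) (use m x in auto)
  also have "\<dots> \<le> h m" unfolding x_def h_def by (rule path_hit[OF P m(2)])
  also have "\<dots> \<le> suminf h"
    using sum_le_suminf[OF hs, of "{m}"] h0 by simp
  finally have tplow: "x ^ (N^3) \<le> termprob Pp p q" using tp by simp
  have xN3: "0 < x ^ (N^3)" using x by simp
  define f where "f = (\<lambda>n. real n * h n)"
  have f0: "0 \<le> f n" for n unfolding f_def using h0 by simp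
  have fb: "sum f {..<M} \<le> real N / x ^ N" for M
    unfolding f_def h_def N_def x_def by (rule numerator_bound[OF P assms(3)])
  have fs: "summable f" by (rule summableI_nonneg_bounded[OF f0 fb])
  have sf: "suminf f \<le> real N / x ^ N" by (rule suminf_le_const[OF fs fb])
  have sf0: "0 \<le> suminf f" using suminf_nonneg[OF fs f0] .
  have "(\<Sum>n. ennreal (real n * hit Pp n p 1 q)) = ennreal (suminf f)"
    using suminf_ennreal2[OF f0 fs] unfolding f_def h_def .
  then have ce: "condexp Pp p q = ennreal (suminf f / termprob Pp p q)"
    unfolding condexp_def using divide_ennreal[OF sf0 assms(2)] by simp
  have "suminf f / termprob Pp p q \<le> (real N / x ^ N) / x ^ (N^3)"
    by (rule frac_le) (use sf sf0 tplow xN3 x N in auto)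
  also have "\<dots> = real N / x ^ (N + N^3)" by (simp add: power_add)
  also have "\<dots> \<le> 5 * real N / x ^ (N + N^3)"
    by (rule divide_right_mono) (use x in auto)
  finally show ?thesis unfolding ce N_def x_def by (rule ennreal_leI)
qed

end
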